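(* For every graph $G$ on $[n]$, the ideal $I^{(2)}_G$ is contained in $I_G$. Moreover, suppose $I^{(2)}_G$ is prime, $I^{(2)}_G\cap\mathbb C[x]=\{0\}$ and $I^{(2)}_G\cap\mathbb C[s]=K_G$. Then $I^{(2)}_G=I_G$.
   Context: Setup. $G\subseteq\binom{[n]}{2}$ is a simple graph, and $G_i$ is the set of neighbours of $i$. We work in the polynomial ring $\mathbb C[s,x]$ with variables $s_{ij}$ ($ij\in G$) and $x_1,\dots,x_n$. $K_G$ denotes the ideal generated by the linear forms $\sum_{j\in G_i}s_{ij}$ for $i\in[n]$ (considered in $\mathbb C[s]$ or in $\mathbb C[s,x]$ as appropriate). $L_G=\sum_{ij\in G}s_{ij}\log(x_i-x_j)$, so $\partial L_G/\partial x_i=\sum_{j\in G_i}s_{ij}/(x_i-x_j)$. The ideals $I^{(0)}_G$ and $I_G$. $I^{(0)}_G$ is generated by $K_G$ and by $\prod_{j\in G_i}(x_i-x_j)\cdot\partial L_G/\partial x_i$ for $i\in[n]$. Then $$I_G=\{f\in\mathbb C[s,x]: abf\in I^{(0)}_G\ \text{for some nonzero } a\in\mathbb C[x]\ \text{and some } b\in\mathbb C[s]\setminus K_G\}.$$ The ideal $I^{(1)}_G$. It is generated by $I^{(0)}_G$ and by $\theta_k=\sum_{ij\in G}s_{ij}\sum_{\ell=0}^k x_i^{k-\ell}x_j^\ell$ for $k=2,\dots,n-2$. Separators and the ideal $I^{(2)}_G$. A subset $T\subset[n]$ is a separator of $G$ if the induced subgraph of $G$ on $[n]\setminus T$ has more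 connected components than $G$. For a separator $T$ and a connected component $C$ of $G\setminus T$, define $f_i(x)=\prod_{t\in T}(x_i-x_t)$ if $i\in C$ and $f_i=0$ otherwise. The expression $\sum_{i=1}^n f_i\,\partial L_G/\partial x_i$ is then a polynomial in $\mathbb C[s,x]$ (a separator-based derivation polynomial). $I^{(2)}_G$ is the ideal generated by $I^{(1)}_G$ together with all separator-based derivation polynomials, over all pairs $(T,C)$. *)

theory Defs
  imports Complex_Main "HOL-Library.Poly_Mapping" "HOL-Library.Product_Lexorder"
begin

text \<open>Variables: x_i (XV i) and s_ij (SV i j, used only for edges (i,j) with i < j).\<close>
datatype var = XV nat | SV nat nat

fun var_enc :: "var \<Rightarrow> nat \<times> nat \<times> nat" where
  "var_enc (XV i) = (0, i, 0)"
| "var_enc (SV i j) = (1, i, j)"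

lemma var_enc_inj: "var_enc a = var_enc b \<Longrightarrow> a = b"
  by (cases a; cases b) auto

instantiation var :: linorder
begin
definition less_eq_var :: "var \<Rightarrow> var \<Rightarrow> bool" where "less_eq_var a b \<longleftrightarrow> var_enc a \<le> var_enc b"
definition less_var :: "var \<Rightarrow> var \<Rightarrow> bool" where "less_var a b \<longleftrightarrow> var_enc a < var_enc b"
instance
  by intro_classes (auto simp: less_eq_var_def less_var_def var_enc_inj)
end

type_synonym mpoly = "(var \<Rightarrow>\<^sub>0 nat) \<Rightarrow>\<^sub>0 complex"

definition Var :: "var \<Rightarrow> mpoly" where
  "Var v = Poly_Mapping.single (Poly_Mapping.single v 1) 1"

definition xv :: "nat \<Rightarrow> mpoly" where "xv i = Var (XV i)"

definition Cx :: "mpoly set" where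
  "Cx = {p::mpoly. \<forall>m\<in>Poly_Mapping.keys p. \<forall>v\<in>Poly_Mapping.keys m. \<exists>i. v = XV i}"

definition Cs :: "mpoly set" where
  "Cs = {p::mpoly. \<forall>m\<in>Poly_Mapping.keys p. \<forall>v\<in>Poly_Mapping.keys m. \<exists>i j. v = SV i j}"

definition ideal_gen :: "mpoly set \<Rightarrow> mpoly set \<Rightarrow> mpoly set" where
  "ideal_gen R S = {f. \<exists>F c. finite F \<and> F \<subseteq> S \<and> (\<forall>g\<in>F. c g \<in> R) \<and> f = (\<Sum>g\<in>F. c g * g)}"

definition prime_ideal :: "mpoly set \<Rightarrow> bool" where
  "prime_ideal I \<longleftrightarrow> I \<noteq> UNIV \<and> (\<forall>a b. a * b \<in> I \<longrightarrow> a \<in> I \<or> b \<in> I)"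

definition graph_on :: "nat \<Rightarrow> (nat \<times> nat) set \<Rightarrow> bool" where
  "graph_on n G \<longleftrightarrow> (\<forall>(i,j)\<in>G. 1 \<le> i \<and> i < j \<and> j \<le> n)"

definition nbrs :: "(nat \<times> nat) set \<Rightarrow> nat \<Rightarrow> nat set" where
  "nbrs G i = {j. (i,j) \<in> G \<or> (j,i) \<in> G}"

definition sv :: "nat \<Rightarrow> nat \<Rightarrow> mpoly" where
  "sv i j = Var (SV (min i j) (max i j))"

definition Kgens :: "nat \<Rightarrow> (nat \<times> nat) set \<Rightarrow> mpoly set" where
  "Kgens n G = {(\<Sum>j\<in>nbrs G i. sv i j) | i. i \<in> {1..n}}"

definition K_G :: "nat \<Rightarrow> (nat \<times> nat) set \<Rightarrow> mpoly set" where
  "K_G n G = ideal_gen Cs (Kgens n G)"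

definition edge_fac :: "nat \<times> nat \<Rightarrow> mpoly" where
  "edge_fac e = xv (fst e) - xv (snd e)"

definition denomG :: "(nat \<times> nat) set \<Rightarrow> mpoly" where
  "denomG G = (\<Prod>e\<in>G. edge_fac e)"

text \<open>D * dL/dx_i = sum_{j in G_i} s_ij * D/(x_i - x_j), as a polynomial.\<close>
definition dL_num :: "(nat \<times> nat) set \<Rightarrow> nat \<Rightarrow> mpoly" where
  "dL_num G i = (\<Sum>j\<in>nbrs G i. sv i j * (if i < j then 1 else -1) *
                   (\<Prod>e\<in>G - {(min i j, max i j)}. edge_fac e))"

text \<open>The polynomial equal to sum_i f_i dL/dx_i (assuming it is a polynomial):
  the unique p with p * D = sum_i f_i * (D * dL/dx_i).\<close>
definition deriv_poly :: "nat \<Rightarrow> (nat \<times> nat) set \<Rightarrow> (nat \<Rightarrow> mpoly) \<Rightarrow> mpoly" where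
  "deriv_poly n G f = (THE p. p * denomG G = (\<Sum>i\<in>{1..n}. f i * dL_num G i))"

definition I0 :: "nat \<Rightarrow> (nat \<times> nat) set \<Rightarrow> mpoly set" where
  "I0 n G = ideal_gen UNIV (Kgens n G \<union>
     {deriv_poly n G (\<lambda>k. if k = i then (\<Prod>j\<in>nbrs G i. xv i - xv j) else 0) | i. i \<in> {1..n}})"

definition I_G :: "nat \<Rightarrow> (nat \<times> nat) set \<Rightarrow> mpoly set" where
  "I_G n G = {f. \<exists>a b. a \<in> Cx \<and> a \<noteq> 0 \<and> b \<in> Cs \<and> b \<notin> K_G n G \<and> a * b * f \<in> I0 n G}"

definition theta :: "(nat \<times> nat) set \<Rightarrow> nat \<Rightarrow> mpoly" where
  "theta G k = (\<Sum>(i,j)\<in>G. sv i j * (\<Sum>l\<in>{0..k}. xv i ^ (k - l) * xv j ^ l))"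

definition I1 :: "nat \<Rightarrow> (nat \<times> nat) set \<Rightarrow> mpoly set" where
  "I1 n G = ideal_gen UNIV (I0 n G \<union> {theta G k | k. 2 \<le> k \<and> k \<le> n - 2})"

definition adj_in :: "(nat \<times> nat) set \<Rightarrow> nat set \<Rightarrow> nat \<Rightarrow> nat \<Rightarrow> bool" where
  "adj_in G V i j \<longleftrightarrow> i \<in> V \<and> j \<in> V \<and> ((i,j) \<in> G \<or> (j,i) \<in> G)"

definition components :: "(nat \<times> nat) set \<Rightarrow> nat set \<Rightarrow> nat set set" where
  "components G V = {{j \<in> V. (adj_in G V)\<^sup>*\<^sup>* i j} | i. i \<in> V}"

definition separator :: "nat \<Rightarrow> (nat \<times> nat) set \<Rightarrow> nat set \<Rightarrow> bool" where
  "separator n G T \<longleftrightarrow> T \<subseteq> {1..n} \<and>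
     card (components G ({1..n} - T)) > card (components G {1..n})"

definition sep_fun :: "nat set \<Rightarrow> nat set \<Rightarrow> nat \<Rightarrow> mpoly" where
  "sep_fun T C i = (if i \<in> C then (\<Prod>t\<in>T. xv i - xv t) else 0)"

definition I2 :: "nat \<Rightarrow> (nat \<times> nat) set \<Rightarrow> mpoly set" where
  "I2 n G = ideal_gen UNIV (I1 n G \<union>
     {deriv_poly n G (sep_fun T C) | T C. separator n G T \<and> C \<in> components G ({1..n} - T)})"

end

theory Submission
  imports Defs
begin

lemma ig_gen: "g \<in> S \<Longrightarrow> g \<in> ideal_gen UNIV S"
  unfolding ideal_gen_def
  by (rule CollectI, rule exI[of _ "{g}"], rule exI[of _ "\<lambda>_. 1"]) auto

lemma ig_zero: "0 \<in> ideal_gen UNIV S"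
  unfolding ideal_gen_def by (rule CollectI, rule exI[of _ "{}"]) auto

lemma ig_add: assumes "a \<in> ideal_gen UNIV S" "b \<in> ideal_gen UNIV S"
  shows "a + b \<in> ideal_gen UNIV S"
proof -
  obtain F c where F: "finite F" "F \<subseteq> S" "a = (\<Sum>g\<in>F. c g * g)"
    using assms(1) unfolding ideal_gen_def by auto
  obtain F' c' where F': "finite F'" "F' \<subseteq> S" "b = (\<Sum>g\<in>F'. c' g * g)"
    using assms(2) unfolding ideal_gen_def by auto
  define d where "d = (\<lambda>g. (if g \<in> F then c g else 0) + (if g \<in> F' then c' g else 0))"
  have "(\<Sum>g\<in>F \<union> F'. d g * g) = (\<Sum>g\<in>F \<union> F'. (if g \<in> F then c g * g else 0))
      + (\<Sum>g\<in>F \<union> F'. (if g \<in> F' then c' g * g else 0))"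
    unfolding d_def sum.distrib[symmetric] by (intro sum.cong) (auto simp: distrib_right)
  also have "(\<Sum>g\<in>F \<union> F'. (if g \<in> F then c g * g else 0)) = a"
    using F F' by (simp add: sum.If_cases Int_absorb1)
  also have "(\<Sum>g\<in>F \<union> F'. (if g \<in> F' then c' g * g else 0)) = b"
    using F F' by (simp add: sum.If_cases Int_absorb1 Int_commute)
  finally show ?thesis unfolding ideal_gen_def using F F'
    by (intro CollectI exI[of _ "F \<union> F'"] exI[of _ d]) auto
qed

lemma ig_mult: assumes "a \<in> ideal_gen UNIV S" shows "r * a \<in> ideal_gen UNIV S"
proof -
  obtain F c where F: "finite F" "F \<subseteq> S" "a = (\<Sum>g\<in>F. c g * g)"
    using assms(1) unfolding ideal_gen_def by auto
  show ?thesis unfolding ideal_gen_def using F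
    by (intro CollectI exI[of _ F] exI[of _ "\<lambda>g. r * c g"]) (auto simp: sum_distrib_left mult.assoc)
qed

lemma ig_sum: "finite A \<Longrightarrow> (\<And>x. x \<in> A \<Longrightarrow> h x \<in> ideal_gen UNIV S) \<Longrightarrow> sum h A \<in> ideal_gen UNIV S"
  by (induction A rule: finite_induct) (auto intro: ig_zero ig_add)

lemma ig_min:
  assumes "S \<subseteq> J" "0 \<in> J" "\<And>a b. a \<in> J \<Longrightarrow> b \<in> J \<Longrightarrow> a + b \<in> J"
    "\<And>r a. a \<in> J \<Longrightarrow> r * a \<in> J"
  shows "ideal_gen R S \<subseteq> J"
proof
  fix f assume "f \<in> ideal_gen R S"
  then obtain F c where F: "finite F" "F \<subseteq> S" "f = (\<Sum>g\<in>F. c g * g)"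
    unfolding ideal_gen_def by auto
  have "(\<Sum>g\<in>F. c g * g) \<in> J" using F(1,2)
    by (induction F rule: finite_induct) (use assms in auto)
  then show "f \<in> J" using F by simp
qed


lemma edgeD: "graph_on n G \<Longrightarrow> (a,b) \<in> G \<Longrightarrow> 1 \<le> a \<and> a < b \<and> b \<le> n"
  unfolding graph_on_def by auto

lemma finG: "graph_on n G \<Longrightarrow> finite G"
  unfolding graph_on_def
  by (rule finite_subset[of _ "{1..n} \<times> {1..n}"]) auto

lemma fin_nbrs: "finite G \<Longrightarrow> finite (nbrs G i)"
  unfolding nbrs_def
  by (rule finite_subset[of _ "snd ` G \<union> fst ` G"]) force+

lemma nbrs_ne: "graph_on n G \<Longrightarrow> j \<in> nbrs G i \<Longrightarrow> j \<noteq> i"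
  unfolding graph_on_def nbrs_def by auto

lemma xv_diff_nz: "i \<noteq> j \<Longrightarrow> xv i - xv j \<noteq> 0"
proof -
  assume ij: "i \<noteq> j"
  have ne: "Poly_Mapping.single (XV i) (1::nat) \<noteq> Poly_Mapping.single (XV j) 1"
    using ij by (metis lookup_single_eq lookup_single_not_eq one_neq_zero var.inject(1))
  have "Poly_Mapping.lookup (xv i) (Poly_Mapping.single (XV i) (1::nat)) = 1"
    by (simp add: xv_def Var_def lookup_single when_def)
  moreover have "Poly_Mapping.lookup (xv j) (Poly_Mapping.single (XV i) (1::nat)) = 0"
    using ne by (simp add: xv_def Var_def lookup_single_not_eq)
  ultimately have "xv i \<noteq> xv j" by force
  then show ?thesis by simp
qed

lemma D_nz: "graph_on n G \<Longrightarrow> denomG G \<noteq> 0"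
  unfolding denomG_def edge_fac_def
  using finG xv_diff_nz by (force simp: graph_on_def)

lemma P_nz: "graph_on n G \<Longrightarrow> (\<Prod>j\<in>nbrs G i. xv i - xv j) \<noteq> 0"
  using finG fin_nbrs xv_diff_nz nbrs_ne by (metis (no_types, lifting) prod_zero_iff)

lemma sv_sym: "sv i j = sv j i"
  unfolding sv_def by (simp add: min.commute max.commute)

lemma regroup:
  assumes g: "graph_on n G"
  shows "(\<Sum>i\<in>{1..n}. f i * dL_num G i) =
    (\<Sum>e\<in>G. sv (fst e) (snd e) * (f (fst e) - f (snd e)) * (\<Prod>e'\<in>G-{e}. edge_fac e'))"
proof -
  define t where "t = (\<lambda>(i,j). f i * (sv i j * (if i < j then 1 else -1) *
     (\<Prod>e\<in>G - {(min i j, max i j)}. edge_fac e)))"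
  have fin: "finite G" using finG g by blast
  have "(\<Sum>i\<in>{1..n}. f i * dL_num G i) = (\<Sum>i\<in>{1..n}. \<Sum>j\<in>nbrs G i. t (i,j))"
    unfolding dL_num_def t_def by (simp add: sum_distrib_left)
  also have "\<dots> = (\<Sum>p\<in>Sigma {1..n} (nbrs G). t p)"
    by (subst sum.Sigma) (auto intro: fin_nbrs fin)
  also have "Sigma {1..n} (nbrs G) = G \<union> prod.swap ` G"
    using g unfolding graph_on_def nbrs_def by force
  also have "(\<Sum>p\<in>G \<union> prod.swap ` G. t p) = (\<Sum>p\<in>G. t p) + (\<Sum>p\<in>prod.swap ` G. t p)"
    by (rule sum.union_disjoint) (use fin g in \<open>auto dest: edgeD\<close>, metis edgeD less_asym)
  also have "(\<Sum>p\<in>prod.swap ` G. t p) = (\<Sum>p\<in>G. t (prod.swap p))"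
    by (subst sum.reindex) (auto simp: inj_on_def)
  also have "(\<Sum>p\<in>G. t p) + (\<Sum>p\<in>G. t (prod.swap p)) = (\<Sum>p\<in>G. t p + t (prod.swap p))"
    by (simp add: sum.distrib)
  also have "\<dots> = (\<Sum>e\<in>G. sv (fst e) (snd e) * (f (fst e) - f (snd e)) * (\<Prod>e'\<in>G-{e}. edge_fac e'))"
  proof (rule sum.cong)
    fix e assume "e \<in> G"
    then obtain a b where e: "e = (a,b)" "a < b" using g unfolding graph_on_def by force
    then show "t e + t (prod.swap e) = sv (fst e) (snd e) * (f (fst e) - f (snd e)) * (\<Prod>e'\<in>G-{e}. edge_fac e')"
      unfolding t_def by (simp add: sv_sym[of b a] algebra_simps)
  qed simp
  finally show ?thesis .
qed


lemma deriv_eq: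
  assumes g: "graph_on n G" and dv: "\<And>a b. (a,b) \<in> G \<Longrightarrow> edge_fac (a,b) dvd f a - f b"
  shows "deriv_poly n G f * denomG G = (\<Sum>i\<in>{1..n}. f i * dL_num G i)"
proof -
  have "\<forall>e\<in>G. \<exists>q. f (fst e) - f (snd e) = edge_fac e * q"
    using dv unfolding dvd_def by (metis prod.collapse)
  then obtain q where q: "\<And>e. e \<in> G \<Longrightarrow> f (fst e) - f (snd e) = edge_fac e * q e"
    by metis
  have fin: "finite G" using finG g by blast
  have S: "(\<Sum>i\<in>{1..n}. f i * dL_num G i) = (\<Sum>e\<in>G. sv (fst e) (snd e) * q e) * denomG G"
    unfolding regroup[OF g] sum_distrib_right
  proof (rule sum.cong)
    fix e assume e: "e \<in> G"
    have "denomG G = edge_fac e * (\<Prod>e'\<in>G-{e}. edge_fac e')"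
      unfolding denomG_def using fin e by (rule prod.remove)
    then show "sv (fst e) (snd e) * (f (fst e) - f (snd e)) * prod edge_fac (G - {e}) =
        sv (fst e) (snd e) * q e * denomG G"
      using q[OF e] by (simp add: algebra_simps)
  qed simp
  have "deriv_poly n G f = (\<Sum>e\<in>G. sv (fst e) (snd e) * q e)"
    unfolding deriv_poly_def S
  proof (rule the_equality)
    fix p assume "p * denomG G = (\<Sum>e\<in>G. sv (fst e) (snd e) * q e) * denomG G"
    then show "p = (\<Sum>e\<in>G. sv (fst e) (snd e) * q e)" using D_nz[OF g] by simp
  qed simp
  then show ?thesis using S by simp
qed

definition PP :: "(nat \<times> nat) set \<Rightarrow> nat \<Rightarrow> mpoly" where
  "PP G i = (\<Prod>j\<in>nbrs G i. xv i - xv j)"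

definition gen0 :: "nat \<Rightarrow> (nat \<times> nat) set \<Rightarrow> nat \<Rightarrow> mpoly" where
  "gen0 n G i = deriv_poly n G (\<lambda>k. if k = i then (\<Prod>j\<in>nbrs G i. xv i - xv j) else 0)"

lemma gen0_in: "i \<in> {1..n} \<Longrightarrow> gen0 n G i \<in> I0 n G"
  unfolding I0_def gen0_def by (rule ig_gen) blast

lemma gen0_eq:
  assumes g: "graph_on n G" and i: "i \<in> {1..n}"
  shows "gen0 n G i * denomG G = PP G i * dL_num G i"
proof -
  have fin: "finite (nbrs G i)" using finG[OF g] fin_nbrs by blast
  have "gen0 n G i * denomG G = (\<Sum>k\<in>{1..n}. (if k = i then PP G i else 0) * dL_num G k)"
    unfolding gen0_def PP_def
  proof (rule deriv_eq[OF g])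
    fix a b assume ab: "(a,b) \<in> G"
    then have lt: "a < b" using edgeD[OF g] by blast
    show "edge_fac (a, b) dvd (if a = i then \<Prod>j\<in>nbrs G i. xv i - xv j else 0) -
           (if b = i then \<Prod>j\<in>nbrs G i. xv i - xv j else 0)"
    proof (cases "a = i")
      case True
      then have "b \<in> nbrs G i" using ab by (simp add: nbrs_def)
      then have "xv i - xv b dvd (\<Prod>j\<in>nbrs G i. xv i - xv j)" by (rule dvd_prodI[OF fin])
      then show ?thesis using True lt by (simp add: edge_fac_def)
    next
      case False
      show ?thesis
      proof (cases "b = i")
        case True
        then have "a \<in> nbrs G i" using ab by (simp add: nbrs_def)
        then have "xv i - xv a dvd (\<Prod>j\<in>nbrs G i. xv i - xv j)" by (rule dvd_prodI[OF fin])
        then have "xv a - xv i dvd (\<Prod>j\<in>nbrs G i. xv i - xv j)"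
          by (metis minus_diff_eq minus_dvd_iff)
        then show ?thesis using True False by (simp add: edge_fac_def)
      qed (use False in simp)
    qed
  qed
  also have "\<dots> = PP G i * dL_num G i"
    using i by (simp add: if_distrib[of "\<lambda>x. x * _"] sum.delta cong: if_cong)
  finally show ?thesis .
qed

definition PPi :: "nat \<Rightarrow> (nat \<times> nat) set \<Rightarrow> mpoly" where
  "PPi n G = (\<Prod>i\<in>{1..n}. PP G i)"

lemma key_I0:
  assumes g: "graph_on n G"
  shows "PPi n G * (\<Sum>i\<in>{1..n}. f i * dL_num G i) \<in> I0 n G"
proof -
  have "PPi n G * (\<Sum>i\<in>{1..n}. f i * dL_num G i) =
     (\<Sum>i\<in>{1..n}. (f i * (\<Prod>k\<in>{1..n}-{i}. PP G k) * denomG G) * gen0 n G i)"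
    unfolding sum_distrib_left
  proof (rule sum.cong)
    fix i assume i: "i \<in> {1..n}"
    have "PPi n G = PP G i * (\<Prod>k\<in>{1..n}-{i}. PP G k)"
      unfolding PPi_def using i by (simp add: prod.remove)
    then show "PPi n G * (f i * dL_num G i) = f i * (\<Prod>k\<in>{1..n}-{i}. PP G k) * denomG G * gen0 n G i"
      using gen0_eq[OF g i] by (simp add: algebra_simps)
  qed simp
  also have "\<dots> \<in> I0 n G"
    using gen0_in[of _ n G] unfolding I0_def by (intro ig_sum ig_mult) auto
  finally show ?thesis .
qed


lemma pow_id:
  fixes x y :: "'a::comm_ring_1"
  shows "(x - y) * (\<Sum>l\<in>{0..k}. x^(k-l) * y^l) = x^Suc k - y^Suc k"
proof -
  have "(\<Sum>l\<in>{0..k}. x^(k-l) * y^l) = (\<Sum>p<Suc k. x^p * y^(k-p))"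
    by (rule sum.reindex_bij_witness[of _ "\<lambda>p. k-p" "\<lambda>l. k-l"]) auto
  then show ?thesis by (simp only: diff_power_eq_sum)
qed

lemma theta_eq:
  assumes g: "graph_on n G"
  shows "theta G k * denomG G = (\<Sum>i\<in>{1..n}. xv i ^ Suc k * dL_num G i)"
  unfolding regroup[OF g] theta_def sum_distrib_right
proof (rule sum.cong)
  fix e assume e: "e \<in> G"
  obtain a b where ab: "e = (a,b)" by force
  have fin: "finite G" using finG g by blast
  let ?P = "\<Prod>e'\<in>G-{e}. edge_fac e'" and ?S = "\<Sum>l = 0..k. xv a ^ (k - l) * xv b ^ l"
  have "denomG G = edge_fac e * ?P"
    unfolding denomG_def using fin e by (rule prod.remove)
  then have Dq: "denomG G = (xv a - xv b) * ?P" by (simp add: ab edge_fac_def)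
  have "sv a b * ?S * denomG G = sv a b * ((xv a - xv b) * ?S) * ?P"
    unfolding Dq by algebra
  also have "\<dots> = sv a b * (xv a ^ Suc k - xv b ^ Suc k) * ?P"
    by (simp only: pow_id)
  finally show "(case e of (i, j) \<Rightarrow> sv i j * (\<Sum>l = 0..k. xv i ^ (k - l) * xv j ^ l)) * denomG G =
         sv (fst e) (snd e) * (xv (fst e) ^ Suc k - xv (snd e) ^ Suc k) * prod edge_fac (G - {e})"
    by (simp add: ab)
qed simp

lemma prod_diff_dvd:
  fixes u v :: mpoly
  shows "finite T \<Longrightarrow> (u - v) dvd (\<Prod>t\<in>T. u - xv t) - (\<Prod>t\<in>T. v - xv t)"
proof (induction T rule: finite_induct)
  case (insert t T)
  let ?A = "\<Prod>t\<in>T. u - xv t" and ?B = "\<Prod>t\<in>T. v - xv t"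
  have "(\<Prod>t\<in>insert t T. u - xv t) - (\<Prod>t\<in>insert t T. v - xv t) = (u - xv t) * (?A - ?B) + (u - v) * ?B"
    using insert by (simp add: algebra_simps)
  then show ?case using insert by (simp add: dvd_add)
qed simp

lemma sep_dvd:
  assumes g: "graph_on n G" and T: "T \<subseteq> {1..n}" and C: "C \<in> components G ({1..n} - T)"
    and ab: "(a,b) \<in> G"
  shows "edge_fac (a,b) dvd sep_fun T C a - sep_fun T C b"
proof -
  define V where "V = {1..n} - T"
  obtain i0 where C_eq: "C = {j \<in> V. (adj_in G V)\<^sup>*\<^sup>* i0 j}"
    using C unfolding components_def V_def by auto
  have finT: "finite T" using T finite_subset by blast
  have abn: "a \<in> {1..n}" "b \<in> {1..n}" using edgeD[OF g ab] by auto
  have clos: "y \<in> C" if "x \<in> C" "y \<notin> T" "y \<in> {1..n}" "(x,y) \<in> G \<or> (y,x) \<in> G" for x y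
  proof -
    have "adj_in G V x y" using that C_eq unfolding adj_in_def V_def by auto
    then show ?thesis using that C_eq V_def by (auto intro: rtranclp.rtrancl_into_rtrancl)
  qed
  show ?thesis
  proof (cases "a \<in> C")
    case aC: True
    show ?thesis
    proof (cases "b \<in> C")
      case True
      then show ?thesis using aC prod_diff_dvd[OF finT, of "xv a" "xv b"]
        by (simp add: sep_fun_def edge_fac_def)
    next
      case False
      then have "b \<in> T" using clos[OF aC _ abn(2)] ab by blast
      then have "xv a - xv b dvd (\<Prod>t\<in>T. xv a - xv t)" by (rule dvd_prodI[OF finT])
      then show ?thesis using aC False by (simp add: sep_fun_def edge_fac_def)
    qed
  next
    case aC: False
    show ?thesis
    proof (cases "b \<in> C")
      case True
      then have "a \<in> T" using clos[OF True _ abn(1)] ab aC by blast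
      then have "xv b - xv a dvd (\<Prod>t\<in>T. xv b - xv t)" by (rule dvd_prodI[OF finT])
      then have "xv a - xv b dvd (\<Prod>t\<in>T. xv b - xv t)"
        by (metis minus_diff_eq minus_dvd_iff)
      then show ?thesis using aC True by (simp add: sep_fun_def edge_fac_def)
    next
      case False
      then show ?thesis using aC by (simp add: sep_fun_def)
    qed
  qed
qed


lemma Cx_mult: "p \<in> Cx \<Longrightarrow> q \<in> Cx \<Longrightarrow> p * q \<in> Cx"
proof -
  assume p: "p \<in> Cx" and q: "q \<in> Cx"
  have "\<exists>i. v = XV i" if m: "m \<in> Poly_Mapping.keys (p * q)" and v: "v \<in> Poly_Mapping.keys m" for m v
  proof -
    have "m \<in> {a + b | a b. a \<in> Poly_Mapping.keys p \<and> b \<in> Poly_Mapping.keys q}"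
      using keys_mult[of p q] m by (rule subsetD)
    then obtain a b where ab: "m = a + b" "a \<in> Poly_Mapping.keys p" "b \<in> Poly_Mapping.keys q"
      by blast
    have "v \<in> Poly_Mapping.keys a \<union> Poly_Mapping.keys b"
      using keys_add[of a b] v ab(1) by (rule_tac subsetD) auto
    then show ?thesis using p q ab unfolding Cx_def by blast
  qed
  then show ?thesis unfolding Cx_def by blast
qed

lemma Cx_diff: "p \<in> Cx \<Longrightarrow> q \<in> Cx \<Longrightarrow> p - q \<in> Cx"
proof -
  assume "p \<in> Cx" "q \<in> Cx"
  moreover have "Poly_Mapping.keys (p - q) \<subseteq> Poly_Mapping.keys p \<union> Poly_Mapping.keys q"
    by (auto simp: in_keys_iff lookup_minus)
  ultimately show ?thesis unfolding Cx_def by blast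
qed

lemma Cx_one: "1 \<in> Cx"
  unfolding Cx_def by simp

lemma Cx_prod: "finite A \<Longrightarrow> (\<And>x. x \<in> A \<Longrightarrow> h x \<in> Cx) \<Longrightarrow> prod h A \<in> Cx"
  by (induction A rule: finite_induct) (auto intro: Cx_one Cx_mult)

lemma xv_Cx: "xv i \<in> Cx"
  unfolding Cx_def xv_def Var_def by simp

lemma one_Cs: "1 \<in> Cs"
  unfolding Cs_def by simp

lemma mono_sum_zero: "(a::var \<Rightarrow>\<^sub>0 nat) + b = 0 \<Longrightarrow> b = 0"
proof (rule poly_mapping_eqI)
  fix k assume h: "a + b = 0"
  then have "Poly_Mapping.lookup (a + b) k = 0" by simp
  then show "Poly_Mapping.lookup b k = Poly_Mapping.lookup 0 k" by (simp add: lookup_add)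
qed

lemma zero_notin_K: "f \<in> ideal_gen R (Kgens n G) \<Longrightarrow> 0 \<notin> Poly_Mapping.keys f"
proof -
  assume "f \<in> ideal_gen R (Kgens n G)"
  then obtain F c where F: "finite F" "F \<subseteq> Kgens n G" "f = (\<Sum>g\<in>F. c g * g)"
    unfolding ideal_gen_def by auto
  have gk: "0 \<notin> Poly_Mapping.keys g" if gK: "g \<in> Kgens n G" for g
  proof -
    obtain i where gi: "g = (\<Sum>j\<in>nbrs G i. sv i j)" using gK unfolding Kgens_def by auto
    have "Poly_Mapping.keys g \<subseteq> (\<Union>j\<in>nbrs G i. Poly_Mapping.keys (sv i j))"
      unfolding gi by (rule keys_sum)
    moreover have "0 \<notin> Poly_Mapping.keys (sv i j)" for j
    proof -
      have "Poly_Mapping.lookup (Poly_Mapping.single (SV (min i j) (max i j)) (1::nat)) (SV (min i j) (max i j)) \<noteq> 0"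
        by simp
      then have "Poly_Mapping.single (SV (min i j) (max i j)) (1::nat) \<noteq> 0" by (metis Poly_Mapping.lookup_zero)
      then show ?thesis unfolding sv_def Var_def by simp
    qed
    ultimately show ?thesis by blast
  qed
  have "0 \<notin> Poly_Mapping.keys (c g * g)" if "g \<in> F" for g
  proof
    assume "0 \<in> Poly_Mapping.keys (c g * g)"
    then obtain a b where "0 = a + b" "b \<in> Poly_Mapping.keys g"
      using keys_mult by blast
    then show False using gk[of g] that F(2) mono_sum_zero by fastforce
  qed
  moreover have "Poly_Mapping.keys f \<subseteq> (\<Union>g\<in>F. Poly_Mapping.keys (c g * g))"
    unfolding F(3) by (rule keys_sum)
  ultimately show ?thesis by blast
qed

lemma one_notin_K: "(1::mpoly) \<notin> K_G n G"
proof
  assume "(1::mpoly) \<in> K_G n G"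
  then have "0 \<notin> Poly_Mapping.keys (1::mpoly)" unfolding K_G_def by (rule zero_notin_K)
  then show False by simp
qed



lemma I0_zero: "0 \<in> I0 n G" unfolding I0_def by (rule ig_zero)
lemma I0_add: "a \<in> I0 n G \<Longrightarrow> b \<in> I0 n G \<Longrightarrow> a + b \<in> I0 n G" unfolding I0_def by (rule ig_add)
lemma I0_mult: "a \<in> I0 n G \<Longrightarrow> r * a \<in> I0 n G" unfolding I0_def by (rule ig_mult)

theorem mainTheorem11:
  fixes n :: nat and G :: "(nat \<times> nat) set"
  assumes "graph_on n G"
  shows "I2 n G \<subseteq> I_G n G \<and>
         (prime_ideal (I2 n G) \<and> I2 n G \<inter> Cx = {0} \<and> I2 n G \<inter> Cs = K_G n G
            \<longrightarrow> I2 n G = I_G n G)"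
proof -
  have g: "graph_on n G" using assms .
  define A where "A = PPi n G * denomG G"
  define J where "J = {h. A * h \<in> I0 n G}"
  have J0: "0 \<in> J" unfolding J_def using I0_zero by simp
  have Jadd: "a + b \<in> J" if "a \<in> J" "b \<in> J" for a b
    using that I0_add unfolding J_def by (fastforce simp: distrib_left)
  have Jmult: "r * a \<in> J" if "a \<in> J" for r a
  proof -
    have "A * (r * a) = r * (A * a)" by (simp add: ac_simps)
    moreover have "r * (A * a) \<in> I0 n G" using that I0_mult unfolding J_def by blast
    ultimately show ?thesis unfolding J_def by (metis (mono_tags) mem_Collect_eq)
  qed
  have I0J: "I0 n G \<subseteq> J" unfolding J_def using I0_mult by blast
  have thJ: "theta G k \<in> J" for k
  proof -
    have "A * theta G k = PPi n G * (theta G k * denomG G)"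
      unfolding A_def by (simp add: ac_simps)
    also have "\<dots> \<in> I0 n G" unfolding theta_eq[OF g] by (rule key_I0[OF g])
    finally show ?thesis unfolding J_def by simp
  qed
  have I1J: "I1 n G \<subseteq> J"
    unfolding I1_def by (rule ig_min) (use I0J thJ J0 Jadd Jmult in auto)
  have sepJ: "deriv_poly n G (sep_fun T C) \<in> J"
    if T: "separator n G T" and C: "C \<in> components G ({1..n} - T)" for T C
  proof -
    have Tn: "T \<subseteq> {1..n}" using T unfolding separator_def by blast
    have "A * deriv_poly n G (sep_fun T C) = PPi n G * (deriv_poly n G (sep_fun T C) * denomG G)"
      unfolding A_def by (simp add: ac_simps)
    also have "\<dots> = PPi n G * (\<Sum>i\<in>{1..n}. sep_fun T C i * dL_num G i)"
      by (subst deriv_eq[OF g sep_dvd[OF g Tn C]]) auto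
    also have "\<dots> \<in> I0 n G" by (rule key_I0[OF g])
    finally show ?thesis unfolding J_def by simp
  qed
  have I2J: "I2 n G \<subseteq> J"
    unfolding I2_def by (rule ig_min) (use I1J sepJ J0 Jadd Jmult in auto)
  have finG': "finite G" using finG[OF g] .
  have ACx: "A \<in> Cx"
    unfolding A_def PPi_def PP_def denomG_def edge_fac_def
    by (intro Cx_mult Cx_prod Cx_diff xv_Cx finite_atLeastAtMost fin_nbrs finG')
  have Anz: "A \<noteq> 0"
  proof -
    have "PPi n G \<noteq> 0" unfolding PPi_def PP_def using P_nz[OF g] by simp
    then show ?thesis unfolding A_def using D_nz[OF g] by simp
  qed
  have JI: "J \<subseteq> I_G n G"
  proof
    fix f assume "f \<in> J"
    then have "A * 1 * f \<in> I0 n G" unfolding J_def by simp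
    then show "f \<in> I_G n G" unfolding I_G_def using ACx Anz one_Cs one_notin_K by blast
  qed
  have part1: "I2 n G \<subseteq> I_G n G" using I2J JI by blast
  have I0I2: "I0 n G \<subseteq> I2 n G"
    unfolding I2_def I1_def by (auto intro!: ig_gen)
  have part2: "I2 n G = I_G n G"
    if pr: "prime_ideal (I2 n G)" and cx: "I2 n G \<inter> Cx = {0}" and cs: "I2 n G \<inter> Cs = K_G n G"
  proof
    show "I_G n G \<subseteq> I2 n G"
    proof
      fix f assume "f \<in> I_G n G"
      then obtain a b where ab: "a \<in> Cx" "a \<noteq> 0" "b \<in> Cs" "b \<notin> K_G n G" "a * b * f \<in> I0 n G"
        unfolding I_G_def by blast
      then have "a * b * f \<in> I2 n G" using I0I2 by blast
      then have "a * b \<in> I2 n G \<or> f \<in> I2 n G" using pr unfolding prime_ideal_def by blast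
      moreover have "a \<notin> I2 n G" using cx ab by blast
      moreover have "b \<notin> I2 n G" using cs ab by blast
      ultimately show "f \<in> I2 n G" using pr unfolding prime_ideal_def by blast
    qed
  qed (rule part1)
  show ?thesis using part1 part2 by blast
qed

end
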